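(* Let $d=2$ and let costs be Euclidean. For any constant $M>0$, there exist two linear classifiers $h_1,h_2:\mathbb R^2\to\{0,1\}$ and an initial feature vector $x^{(0)}\in\mathbb R^2$ such that $$\frac{c^*_{\mathrm{conj}}(x^{(0)},\{h_1,h_2\})}{c^*_{\mathrm{seq}}(x^{(0)},\{h_1,h_2\})}\ge M.$$
   Context: A linear classifier is $h(x)=\mathbf 1[w^\top x\ge b]$. For classifiers $h_1,\dots,h_k$ and cost $c(x,\hat x)=\|\hat x-x\|_2$: the sequential manipulation cost is $c^*_{\mathrm{seq}}(x^{(0)},\{h_1,\dots,h_k\})=\min\{\sum_{i=0}^{k-1}c(x^{(i)},x^{(i+1)}):x^{(1)},\dots,x^{(k)}\text{ with }h_i(x^{(i)})=1\ \forall i\}$; the conjunction manipulation cost is $c^*_{\mathrm{conj}}(x,\{h_1,\dots,h_k\})=\min\{c(x,z):h_i(z)=1\ \forall i\}$. *)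

theory Defs
  imports "HOL-Analysis.Analysis"
begin

definition lin_clf :: "real^'n \<Rightarrow> real \<Rightarrow> real^'n \<Rightarrow> nat" where
  "lin_clf w b x = (if w \<bullet> x \<ge> b then 1 else 0)"

definition cost :: "real^'n \<Rightarrow> real^'n \<Rightarrow> real" where
  "cost x x' = norm (x' - x)"

definition seq_cost :: "real^'n \<Rightarrow> (real^'n \<Rightarrow> nat) list \<Rightarrow> real" where
  "seq_cost x0 hs = Inf {(\<Sum>i<length hs. cost (x i) (x (Suc i))) | x.
      x 0 = x0 \<and> (\<forall>i\<in>{1..length hs}. (hs ! (i - 1)) (x i) = 1)}"

definition conj_cost :: "real^'n \<Rightarrow> (real^'n \<Rightarrow> nat) list \<Rightarrow> real" where
  "conj_cost x0 hs = Inf {cost x0 z | z. \<forall>h\<in>set hs. h z = 1}"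

end

theory Submission
  imports Defs
begin

lemma inner2: "(a::real^2) \<bullet> b = a$1 * b$1 + a$2 * b$2"
  by (simp add: inner_vec_def sum_2)

theorem mainTheorem12:
  fixes M :: real
  assumes "M > 0"
  shows "\<exists>(w1::real^2) b1 (w2::real^2) b2 (x0::real^2).
           {z. lin_clf w1 b1 z = 1 \<and> lin_clf w2 b2 z = 1} \<noteq> {} \<and>
           conj_cost x0 [lin_clf w1 b1, lin_clf w2 b2] / seq_cost x0 [lin_clf w1 b1, lin_clf w2 b2] \<ge> M"
proof -
  define K where "K = M"
  have K: "K > 0" using assms K_def by simp
  define w1 :: "real^2" where "w1 = vector [1, 0]"
  define w2 :: "real^2" where "w2 = vector [-K, 1]"
  define x0 :: "real^2" where "x0 = 0"
  define p :: "real^2" where "p = vector [0, 1]"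
  define q :: "real^2" where "q = vector [-1/K, 0]"
  have h1: "lin_clf w1 0 z = 1 \<longleftrightarrow> z$1 \<ge> 0" for z
    by (simp add: lin_clf_def w1_def inner2)
  have h2: "lin_clf w2 1 z = 1 \<longleftrightarrow> z$2 - K * z$1 \<ge> 1" for z
    by (simp add: lin_clf_def w2_def inner2)
  have h1': "lin_clf w1 0 z = Suc 0 \<longleftrightarrow> z$1 \<ge> 0" for z using h1 by simp
  have h2': "lin_clf w2 1 z = Suc 0 \<longleftrightarrow> z$2 - K * z$1 \<ge> 1" for z using h2 by simp
  have pin: "lin_clf w1 0 p = 1 \<and> lin_clf w2 1 p = 1"
    unfolding h1 h2 p_def by simp
  let ?C = "{cost x0 z | z. \<forall>h\<in>set [lin_clf w1 0, lin_clf w2 1]. h z = 1}"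
  have C1: "conj_cost x0 [lin_clf w1 0, lin_clf w2 1] \<ge> 1"
    unfolding conj_cost_def
  proof (rule cInf_greatest)
    show "?C \<noteq> {}" using pin by auto
    fix c assume "c \<in> ?C"
    then obtain z where c: "c = cost x0 z" and z: "z$1 \<ge> 0" "z$2 - K * z$1 \<ge> 1"
      by (auto simp: h1' h2')
    have "z$2 \<ge> 1" using z K by (smt (verit) mult_nonneg_nonneg)
    moreover have "\<bar>z$2\<bar> \<le> norm z" by (rule component_le_norm_cart)
    ultimately show "1 \<le> c" by (simp add: c cost_def x0_def)
  qed
  let ?S = "{(\<Sum>i<length [lin_clf w1 0, lin_clf w2 1]. cost (x i) (x (Suc i))) | x.
      x 0 = x0 \<and> (\<forall>i\<in>{1..length [lin_clf w1 0, lin_clf w2 1]}. ([lin_clf w1 0, lin_clf w2 1] ! (i - 1)) (x i) = 1)}"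
  have lb: "s \<ge> 1 / (1 + K)" if "s \<in> ?S" for s
  proof -
    obtain x :: "nat \<Rightarrow> real^2" where s0: "s = (\<Sum>i<length [lin_clf w1 0, lin_clf w2 1]. cost (x i) (x (Suc i)))" and x0: "x 0 = 0"
      and xa: "\<forall>i\<in>{1..length [lin_clf w1 0, lin_clf w2 1]}. ([lin_clf w1 0, lin_clf w2 1] ! (i - 1)) (x i) = 1"
      using \<open>s \<in> ?S\<close> unfolding x0_def by blast
    have s: "s = cost (x 0) (x 1) + cost (x 1) (x 2)" using s0 by (simp add: numeral_2_eq_2)
    have "([lin_clf w1 0, lin_clf w2 1] ! (2 - 1)) (x 2) = 1" using xa[rule_format, of 2] by simp
    then have x2: "(x 2)$2 - K * (x 2)$1 \<ge> 1" using h2 by simp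
    have "norm (x 2) \<le> s" unfolding s cost_def x0
      using norm_triangle_ineq[of "x 1 - 0" "x 2 - x 1"] by simp
    have a1: "\<bar>(x 2)$1\<bar> \<le> norm (x 2)" "\<bar>(x 2)$2\<bar> \<le> norm (x 2)"
      by (rule component_le_norm_cart)+
    have "-(norm (x 2)) \<le> (x 2)$1" using a1 by linarith
    from mult_left_mono[OF this, of K] K have "K * (x 2)$1 \<ge> - (K * norm (x 2))" by simp
    then have "1 \<le> (1 + K) * norm (x 2)" using x2 a1 by (simp add: algebra_simps)
    then have "1 / (1 + K) \<le> norm (x 2)" using K by (simp add: field_simps)
    with \<open>norm (x 2) \<le> s\<close> show ?thesis by simp
  qed
  have Sne: "(\<lambda>i::nat. if i = 2 then q else 0) \<in> {x. x 0 = x0 \<and> (\<forall>i\<in>{1..length [lin_clf w1 0, lin_clf w2 1]}. ([lin_clf w1 0, lin_clf w2 1] ! (i - 1)) (x i) = 1)}"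
  proof -
    have "i \<in> {1..2} \<Longrightarrow> i = 1 \<or> i = (2::nat)" for i by auto
    then show ?thesis
      using K by (auto simp: x0_def h1' h2' q_def)
  qed
  have qs: "1 / K \<in> ?S"
  proof -
    have "norm q = 1 / K" using K by (simp add: q_def norm_vec_def L2_set_def sum_2)
    then have "(\<Sum>i<length [lin_clf w1 0, lin_clf w2 1]. cost ((\<lambda>i::nat. if i = 2 then q else 0) i) ((\<lambda>i::nat. if i = 2 then q else 0) (Suc i))) = 1/K"
      by (simp add: cost_def numeral_2_eq_2)
    then show ?thesis using Sne
      by (intro CollectI exI[where x="\<lambda>i::nat. if i = 2 then q else 0"]) simp
  qed
  have bdd: "bdd_below ?S" unfolding bdd_below_def using lb by blast
  have su: "seq_cost x0 [lin_clf w1 0, lin_clf w2 1] \<le> 1 / K"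
    unfolding seq_cost_def by (rule cInf_lower[OF qs bdd])
  have sl: "seq_cost x0 [lin_clf w1 0, lin_clf w2 1] \<ge> 1 / (1 + K)"
    unfolding seq_cost_def using qs lb by (intro cInf_greatest) auto
  have spos: "seq_cost x0 [lin_clf w1 0, lin_clf w2 1] > 0"
    using sl K by (smt (verit) divide_pos_pos)
  have "conj_cost x0 [lin_clf w1 0, lin_clf w2 1] / seq_cost x0 [lin_clf w1 0, lin_clf w2 1] \<ge> 1 / (1/K)"
    using C1 su spos K by (intro frac_le) auto
  then have "conj_cost x0 [lin_clf w1 0, lin_clf w2 1] / seq_cost x0 [lin_clf w1 0, lin_clf w2 1] \<ge> M"
    using K_def K by simp
  moreover have "{z. lin_clf w1 0 z = 1 \<and> lin_clf w2 1 z = 1} \<noteq> {}" using pin by auto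
  ultimately show ?thesis by blast
qed

end
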